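(* Let $n\ge 2$ and let $\mathcal{G}\subseteq 2^{[n]}$ be an IU-family, i.e. $G\cap G'\neq\emptyset$ and $G\cup G'\neq[n]$ for all $G,G'\in\mathcal{G}$. Then $\beta(\mathcal{G})\le 2^{n-4}$.
   Context: $[n]=\{1,\dots,n\}$ and $2^{[n]}$ is the family of all subsets of $[n]$. For $\mathcal{F}\subseteq 2^{[n]}$ and distinct $i,j\in[n]$, let $\mathcal{F}(i,\bar{j})=\{F\setminus\{i\}: F\in\mathcal{F},\ F\cap\{i,j\}=\{i\}\}$. The sturdiness of $\mathcal{F}$ is $\beta(\mathcal{F})=\min_{1\le i\neq j\le n}|\mathcal{F}(i,\bar{j})|$. *)

theory Defs
  imports Complex_Main
begin

definition restr :: "nat set set \<Rightarrow> nat \<Rightarrow> nat \<Rightarrow> nat set set" where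
  "restr F i j = {A - {i} | A. A \<in> F \<and> A \<inter> {i, j} = {i}}"

definition sturdiness :: "nat \<Rightarrow> nat set set \<Rightarrow> nat" where
  "sturdiness n F = Min {card (restr F i j) | i j. i \<in> {1..n} \<and> j \<in> {1..n} \<and> i \<noteq> j}"

definition IU_family :: "nat \<Rightarrow> nat set set \<Rightarrow> bool" where
  "IU_family n G \<longleftrightarrow> G \<subseteq> Pow {1..n} \<and>
     (\<forall>A\<in>G. \<forall>B\<in>G. A \<inter> B \<noteq> {} \<and> A \<union> B \<noteq> {1..n})"

end

theory Submission
  imports Defs
begin

lemma arith1:
  fixes u0 u1 d0 d1 K i0 i1 :: nat
  assumes "u0 \<le> u1" "d1 \<le> d0" "K*i0 \<le> u0*d0" "K*i1 \<le> u1*d1"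
  shows "2*K*(i0+i1) \<le> (u0+u1)*(d0+d1)"
proof -
  obtain p where p: "u1 = u0 + p" using assms(1) le_Suc_ex by blast
  obtain q where q: "d0 = d1 + q" using assms(2) le_Suc_ex by blast
  have "2*K*(i0+i1) \<le> 2*(u0*d0 + u1*d1)" using add_mono[OF assms(3,4)] by (simp add: algebra_simps)
  also have "\<dots> \<le> (u0+u1)*(d0+d1)" unfolding p q by (simp add: algebra_simps)
  finally show ?thesis .
qed

lemma card_split:
  assumes "finite S" "e \<notin> S" "F \<subseteq> Pow (insert e S)"
  shows "card F = card {Y\<in>F. e \<notin> Y} + card {Y. Y \<subseteq> S \<and> insert e Y \<in> F}"
proof -
  have fin: "finite F" using assms(1,3) finite_subset by fastforce
  have eq: "F = {Y\<in>F. e \<notin> Y} \<union> {Y\<in>F. e \<in> Y}" by blast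
  have "card ({Y\<in>F. e \<notin> Y} \<union> {Y\<in>F. e \<in> Y}) = card {Y\<in>F. e \<notin> Y} + card {Y\<in>F. e \<in> Y}"
    by (rule card_Un_disjoint) (use fin in auto)
  hence c: "card F = card {Y\<in>F. e \<notin> Y} + card {Y\<in>F. e \<in> Y}" using eq by simp
  have "bij_betw (insert e) {Y. Y \<subseteq> S \<and> insert e Y \<in> F} {Y\<in>F. e \<in> Y}"
  proof (rule bij_betw_byWitness[where f' = "\<lambda>X. X - {e}"])
    show "insert e ` {Y. Y \<subseteq> S \<and> insert e Y \<in> F} \<subseteq> {Y \<in> F. e \<in> Y}" by blast
    show "(\<lambda>X. X - {e}) ` {Y \<in> F. e \<in> Y} \<subseteq> {Y. Y \<subseteq> S \<and> insert e Y \<in> F}"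
    proof
      fix Z assume "Z \<in> (\<lambda>X. X - {e}) ` {Y \<in> F. e \<in> Y}"
      then obtain X where X: "X \<in> F" "e \<in> X" "Z = X - {e}" by blast
      have "X \<subseteq> insert e S" using X(1) assms(3) by blast
      hence "Z \<subseteq> S" using X(3) by blast
      moreover have "insert e Z = X" using X(2,3) by blast
      ultimately show "Z \<in> {Y. Y \<subseteq> S \<and> insert e Y \<in> F}" using X(1) by simp
    qed
    show "\<forall>x\<in>{Y. Y \<subseteq> S \<and> insert e Y \<in> F}. insert e x - {e} = x" using assms(2) by blast
    show "\<forall>y\<in>{Y \<in> F. e \<in> Y}. insert e (y - {e}) = y" by blast
  qed
  hence "card {Y. Y \<subseteq> S \<and> insert e Y \<in> F} = card {Y\<in>F. e \<in> Y}" by (rule bij_betw_same_card)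
  thus ?thesis using c by simp
qed

definition upset :: "'a set \<Rightarrow> 'a set set \<Rightarrow> bool" where
  "upset S U \<longleftrightarrow> (\<forall>X\<in>U. \<forall>Y. X \<subseteq> Y \<and> Y \<subseteq> S \<longrightarrow> Y \<in> U)"
definition downset :: "'a set set \<Rightarrow> bool" where
  "downset D \<longleftrightarrow> (\<forall>X\<in>D. \<forall>Y. Y \<subseteq> X \<longrightarrow> Y \<in> D)"

lemma kleitman:
  assumes "finite S"
  shows "U \<subseteq> Pow S \<Longrightarrow> D \<subseteq> Pow S \<Longrightarrow> upset S U \<Longrightarrow> downset D \<Longrightarrow>
    2 ^ card S * card (U \<inter> D) \<le> card U * card D"
  using assms
proof (induction S arbitrary: U D rule: finite_induct)
  case empty
  have "U = {} \<or> U = {{}}" "D = {} \<or> D = {{}}" using empty by auto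
  then show ?case by auto
next
  case (insert e S)
  define U0 where "U0 = {Y\<in>U. e \<notin> Y}"
  define U1 where "U1 = {Y. Y \<subseteq> S \<and> insert e Y \<in> U}"
  define D0 where "D0 = {Y\<in>D. e \<notin> Y}"
  define D1 where "D1 = {Y. Y \<subseteq> S \<and> insert e Y \<in> D}"
  have UD: "U \<inter> D \<subseteq> Pow (insert e S)" using insert(4) by auto
  have c1: "card U = card U0 + card U1" unfolding U0_def U1_def by (rule card_split[OF insert(1,2) insert(4)])
  have c2: "card D = card D0 + card D1" unfolding D0_def D1_def by (rule card_split[OF insert(1,2) insert(5)])
  have c3: "card (U \<inter> D) = card (U0 \<inter> D0) + card (U1 \<inter> D1)"
  proof -
    have "card (U \<inter> D) = card {Y\<in>U \<inter> D. e \<notin> Y} + card {Y. Y \<subseteq> S \<and> insert e Y \<in> U \<inter> D}"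
      using card_split[OF insert(1,2) UD] .
    moreover have "{Y\<in>U \<inter> D. e \<notin> Y} = U0 \<inter> D0" unfolding U0_def D0_def by auto
    moreover have "{Y. Y \<subseteq> S \<and> insert e Y \<in> U \<inter> D} = U1 \<inter> D1" unfolding U1_def D1_def by auto
    ultimately show ?thesis by simp
  qed
  have U0s: "U0 \<subseteq> Pow S" using insert(4) unfolding U0_def by auto
  have D0s: "D0 \<subseteq> Pow S" using insert(5) unfolding D0_def by auto
  have U1s: "U1 \<subseteq> Pow S" unfolding U1_def by auto
  have D1s: "D1 \<subseteq> Pow S" unfolding D1_def by auto
  have U0u: "upset S U0" using insert(6) insert(2) unfolding upset_def U0_def by blast
  have U1u: "upset S U1" using insert(6) unfolding upset_def U1_def
    by (metis insert_mono mem_Collect_eq)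
  have D0d: "downset D0" using insert(7) unfolding downset_def D0_def by blast
  have D1d: "downset D1" using insert(7) unfolding downset_def D1_def
    by (metis (no_types, lifting) insert_mono mem_Collect_eq order_trans)
  have m1: "card U0 \<le> card U1"
  proof (rule card_mono)
    show "finite U1" using U1s insert(1) by (meson finite_Pow_iff finite_subset)
    show "U0 \<subseteq> U1"
    proof
      fix x assume x: "x \<in> U0"
      hence xS: "x \<subseteq> S" using insert(4) unfolding U0_def by auto
      have "insert e x \<in> U" using insert(6) x xS unfolding upset_def U0_def by blast
      thus "x \<in> U1" using xS unfolding U1_def by simp
    qed
  qed
  have m2: "card D1 \<le> card D0"
  proof (rule card_mono)
    show "finite D0" using D0s insert(1) by (meson finite_Pow_iff finite_subset)
    show "D1 \<subseteq> D0" using insert(7) insert(2) unfolding downset_def D0_def D1_def by auto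
  qed
  have i0: "2 ^ card S * card (U0 \<inter> D0) \<le> card U0 * card D0" using insert.IH[OF U0s D0s U0u D0d] .
  have i1: "2 ^ card S * card (U1 \<inter> D1) \<le> card U1 * card D1" using insert.IH[OF U1s D1s U1u D1d] .
  have "2 * 2 ^ card S * (card (U0 \<inter> D0) + card (U1 \<inter> D1)) \<le> (card U0 + card U1) * (card D0 + card D1)"
    using arith1[OF m1 m2 i0 i1] .
  then show ?case using c1 c2 c3 insert(1,2) by simp
qed

lemma arith2:
  fixes N a c i i2 u d :: nat
  assumes "a \<le> i" "N*i \<le> u*d" "c \<le> i2" "N*i2 \<le> (N-u)*(N-d)" "u \<le> N" "d \<le> N" "0 < N"
  shows "4*a \<le> N \<or> 4*c \<le> N"
proof (rule ccontr)
  assume "\<not> ?thesis"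
  hence h: "N < 4*a" "N < 4*c" by auto
  have "N*N < 4*u*d"
  proof -
    have "N*N < N*(4*a)" using h assms(7) by simp 
    also have "\<dots> \<le> 4*(N*i)" using assms(1) by simp
    also have "\<dots> \<le> 4*(u*d)" using assms(2) by simp
    finally show ?thesis by simp
  qed
  moreover have "N*N < 4*(N-u)*(N-d)"
  proof -
    have "N*N < N*(4*c)" using h assms(7) by simp
    also have "\<dots> \<le> 4*(N*i2)" using assms(3) by simp
    also have "\<dots> \<le> 4*((N-u)*(N-d))" using assms(4) by simp
    finally show ?thesis by simp
  qed
  ultimately have q1: "real (N*N) < real (4*u*d)" and q2: "real (N*N) < real (4*(N-u)*(N-d))"
    by (simp_all only: of_nat_less_iff)
  have r1: "real N * real N < 4 * real u * real d" using q1 by simp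
  have r2: "real N * real N < 4 * (real N - real u) * (real N - real d)"
    using q2 assms(5,6) by (simp add: of_nat_diff)
  have e1: "(real u + real d)^2 - 4*real u*real d = (real u - real d)^2" by (simp add: power2_eq_square algebra_simps)
  have s1: "real N ^ 2 < (real u + real d)^2" using r1 e1 zero_le_power2[of "real u - real d"] unfolding power2_eq_square by linarith
  have e2: "(2*real N - real u - real d)^2 - 4 * (real N - real u) * (real N - real d) = (real u - real d)^2"
    by (simp add: power2_eq_square algebra_simps)
  have s2: "real N ^ 2 < (2*real N - real u - real d)^2" using r2 e2 zero_le_power2[of "real u - real d"] unfolding power2_eq_square by linarith
  have "real N < real u + real d" using power_less_imp_less_base[OF s1] by simp
  moreover have "real N < 2*real N - real u - real d" using power_less_imp_less_base[OF s2] assms(5,6) by simp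
  ultimately show False by simp
qed
lemma cross_min:
  fixes S :: "'a set"
  assumes fin: "finite S" and As: "A \<subseteq> Pow S" and Bs: "B \<subseteq> Pow S"
    and cr: "\<forall>X\<in>A. \<forall>Y\<in>B. X \<inter> Y \<noteq> {} \<and> X \<union> Y \<noteq> S"
  shows "4 * card A \<le> 2 ^ card S \<or> 4 * card B \<le> 2 ^ card S"
proof -
  define C where "C = (\<lambda>Y. S - Y) ` B"
  have cC: "card C = card B" unfolding C_def
  proof (rule card_image)
    show "inj_on (\<lambda>Y. S - Y) B" using Bs unfolding inj_on_def by (metis Diff_Diff_Int PowD inf.absorb_iff2 subsetD)
  qed
  define U where "U = {Y. Y \<subseteq> S \<and> (\<exists>X\<in>A. X \<subseteq> Y)}"
  define D where "D = {Y. \<exists>X\<in>A. Y \<subseteq> X}"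
  define U' where "U' = Pow S - U"
  define D' where "D' = Pow S - D"
  have Us: "U \<subseteq> Pow S" unfolding U_def by auto
  have Ds: "D \<subseteq> Pow S" unfolding D_def using As by auto
  have U's: "U' \<subseteq> Pow S" and D's: "D' \<subseteq> Pow S" unfolding U'_def D'_def by auto
  have finP: "finite (Pow S)" using fin by simp
  have cU': "card U' = 2 ^ card S - card U" unfolding U'_def using card_Diff_subset[OF finite_subset[OF Us finP] Us] fin by (simp add: card_Pow)
  have cD': "card D' = 2 ^ card S - card D" unfolding D'_def using card_Diff_subset[OF finite_subset[OF Ds finP] Ds] fin by (simp add: card_Pow)
  have uN: "card U \<le> 2 ^ card S" using card_mono[OF finP Us] fin by (simp add: card_Pow)
  have dN: "card D \<le> 2 ^ card S" using card_mono[OF finP Ds] fin by (simp add: card_Pow)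
  have up1: "upset S U" unfolding upset_def U_def by auto
  have dn1: "downset D" unfolding downset_def D_def by auto
  have up2: "upset S D'" unfolding upset_def D'_def D_def by (auto dest: order_trans)
  have dn2: "downset U'" unfolding downset_def U'_def U_def by (auto dest: order_trans)
  have k1: "2 ^ card S * card (U \<inter> D) \<le> card U * card D" using kleitman[OF fin Us Ds up1 dn1] .
  have k2: "2 ^ card S * card (D' \<inter> U') \<le> card D' * card U'" using kleitman[OF fin D's U's up2 dn2] .
  have a1: "card A \<le> card (U \<inter> D)"
  proof (rule card_mono)
    show "finite (U \<inter> D)" using finite_subset[OF Us finP] by simp
    show "A \<subseteq> U \<inter> D" unfolding U_def D_def using As by auto
  qed
  have a2: "card C \<le> card (D' \<inter> U')"
  proof (rule card_mono)
    show "finite (D' \<inter> U')" using finite_subset[OF U's finP] by simp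
    show "C \<subseteq> D' \<inter> U'"
    proof
      fix Z assume "Z \<in> C"
      then obtain Y where Y: "Y \<in> B" "Z = S - Y" unfolding C_def by auto
      have "Z \<notin> U"
      proof
        assume "Z \<in> U"
        then obtain X where "X \<in> A" "X \<subseteq> S - Y" unfolding U_def using Y(2) by auto
        thus False using cr Y by blast
      qed
      moreover have "Z \<notin> D"
      proof
        assume "Z \<in> D"
        then obtain X where X: "X \<in> A" "S - Y \<subseteq> X" unfolding D_def using Y(2) by auto
        hence "X \<union> Y = S" using As Bs Y by auto
        thus False using cr Y X by blast
      qed
      ultimately show "Z \<in> D' \<inter> U'" unfolding D'_def U'_def using Y by auto
    qed
  qed
  have k2': "2 ^ card S * card (D' \<inter> U') \<le> (2 ^ card S - card U) * (2 ^ card S - card D)"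
    using k2 cU' cD' by (simp add: mult.commute)
  show ?thesis using arith2[OF a1 k1 a2 k2' uN dN] cC by simp
qed
lemma pair_facts:
  assumes "Z \<inter> {a,b} = {a}" "a \<noteq> b"
  shows "a \<in> Z" "b \<notin> Z"
proof -
  have "a \<in> Z \<inter> {a,b}" using assms(1) by simp
  thus "a \<in> Z" by simp
  show "b \<notin> Z"
  proof
    assume "b \<in> Z"
    hence "b \<in> Z \<inter> {a,b}" by simp
    hence "b \<in> {a}" using assms(1) by (simp only:)
    with assms(2) show False by simp
  qed
qed

lemma restr_mem: "X \<in> restr F i j \<longleftrightarrow> (\<exists>Z. Z \<in> F \<and> Z \<inter> {i,j} = {i} \<and> X = Z - {i})"
  unfolding restr_def by blast

theorem theorem1p3:
  fixes n :: nat and G :: "nat set set"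
  assumes "n \<ge> 2" and "IU_family n G"
  shows "real (sturdiness n G) \<le> 2 powr (real n - 4)"
proof -
  define S where "S = {3..n}"
  have cS: "card S = n - 2" unfolding S_def by simp
  have GP: "G \<subseteq> Pow {1..n}" and GI: "\<forall>A\<in>G. \<forall>B\<in>G. A \<inter> B \<noteq> {} \<and> A \<union> B \<noteq> {1..n}"
    using assms(2) unfolding IU_family_def by auto
  define A where "A = restr G 1 2"
  define B where "B = restr G 2 1"
  have three: "\<And>x::nat. 1 \<le> x \<Longrightarrow> x \<noteq> 1 \<Longrightarrow> x \<noteq> 2 \<Longrightarrow> 3 \<le> x" by presburger
  have As: "A \<subseteq> Pow S"
  proof
    fix X assume "X \<in> A"
    then obtain Z where Z: "Z \<in> G" "Z \<inter> {1,2} = {1}" "X = Z - {1}" using restr_mem[of X G 1 2] unfolding A_def by blast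
    show "X \<in> Pow S"
    proof (rule PowI, rule subsetI)
      fix x assume x: "x \<in> X"
      have xZ: "x \<in> Z" and x1: "x \<noteq> 1" using x Z(3) by blast+
      have x2: "x \<noteq> 2"
      proof
        assume "x = 2"
        hence "x \<in> Z \<inter> {1,2}" using xZ by blast
        hence "x \<in> {1}" using Z(2) by (simp only:)
        thus False using \<open>x = 2\<close> by simp
      qed
      have "x \<in> {1..n}" using xZ Z(1) GP by blast
      hence "1 \<le> x" "x \<le> n" by simp_all
      thus "x \<in> S" unfolding S_def using three[of x] x1 x2 by simp
    qed
  qed
  have Bs: "B \<subseteq> Pow S"
  proof
    fix X assume "X \<in> B"
    then obtain Z where Z: "Z \<in> G" "Z \<inter> {2,1} = {2}" "X = Z - {2}" using restr_mem[of X G 2 1] unfolding B_def by blast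
    show "X \<in> Pow S"
    proof (rule PowI, rule subsetI)
      fix x assume x: "x \<in> X"
      have xZ: "x \<in> Z" and x2: "x \<noteq> 2" using x Z(3) by blast+
      have x1: "x \<noteq> 1"
      proof
        assume "x = 1"
        hence "x \<in> Z \<inter> {2,1}" using xZ by blast
        hence "x \<in> {2}" using Z(2) by (simp only:)
        thus False using \<open>x = 1\<close> by simp
      qed
      have "x \<in> {1..n}" using xZ Z(1) GP by blast
      hence "1 \<le> x" "x \<le> n" by simp_all
      thus "x \<in> S" unfolding S_def using three[of x] x1 x2 by simp
    qed
  qed
  have cr: "\<forall>X\<in>A. \<forall>Y\<in>B. X \<inter> Y \<noteq> {} \<and> X \<union> Y \<noteq> S"
  proof (intro ballI)
    fix X Y assume "X \<in> A" "Y \<in> B"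
    then obtain Z W where Z: "Z \<in> G" "Z \<inter> {1,2} = {1}" "X = Z - {1}"
      and W: "W \<in> G" "W \<inter> {2,1} = {2}" "Y = W - {2}" using restr_mem[of X G 1 2] restr_mem[of Y G 2 1] unfolding A_def B_def by blast
    have ne: "(1::nat) \<noteq> 2" by simp
    have z12: "1 \<in> Z" "2 \<notin> Z" using pair_facts[OF Z(2) ne] by simp_all
    have w12: "2 \<in> W" "1 \<notin> W" using pair_facts[OF W(2) ne[symmetric]] by simp_all
    have Z': "Z = insert 1 X" "2 \<notin> X" "1 \<notin> X" using Z(3) z12 by blast+
    have W': "W = insert 2 Y" "1 \<notin> Y" "2 \<notin> Y" using W(3) w12 by blast+
    have "Z \<inter> W \<noteq> {}" "Z \<union> W \<noteq> {1..n}" using GI Z(1) W(1) by blast+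
    moreover have "Z \<inter> W = X \<inter> Y" using Z' W' ne by blast
    moreover have "X \<union> Y = S \<Longrightarrow> Z \<union> W = {1..n}"
    proof -
      assume h: "X \<union> Y = S"
      have "{1..n} = insert 1 (insert 2 S)"
      proof (rule set_eqI)
        fix x :: nat
        show "x \<in> {1..n} \<longleftrightarrow> x \<in> insert 1 (insert 2 S)"
          unfolding S_def using assms(1) three[of x] by auto
      qed
      thus ?thesis using h Z'(1) W'(1) by blast
    qed
    ultimately show "X \<inter> Y \<noteq> {} \<and> X \<union> Y \<noteq> S" by blast
  qed
  have fS: "finite S" unfolding S_def by simp
  have key: "4 * min (card A) (card B) \<le> 2 ^ (n - 2)"
    using cross_min[OF fS As Bs cr] cS by (auto simp: min_def)
  define M where "M = {card (restr G i j) | i j. i \<in> {1..n} \<and> j \<in> {1..n} \<and> i \<noteq> j}"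
  have finM: "finite M"
  proof -
    have "M \<subseteq> (\<lambda>(i,j). card (restr G i j)) ` ({1..n} \<times> {1..n})" unfolding M_def by auto
    thus ?thesis by (rule finite_subset) simp
  qed
  have "card A \<in> M" unfolding M_def A_def using assms(1) by (intro CollectI exI[of _ 1] exI[of _ 2]) auto
  hence sA: "sturdiness n G \<le> card A" unfolding sturdiness_def M_def[symmetric] using finM by simp
  have "card B \<in> M" unfolding M_def B_def using assms(1) by (intro CollectI exI[of _ 2] exI[of _ 1]) auto
  hence sB: "sturdiness n G \<le> card B" unfolding sturdiness_def M_def[symmetric] using finM by simp
  have "4 * sturdiness n G \<le> 2 ^ (n - 2)" using key sA sB by (simp add: min_def split: if_splits)
  hence "real (4 * sturdiness n G) \<le> real (2 ^ (n - 2))" by (simp only: of_nat_le_iff)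
  hence h: "4 * real (sturdiness n G) \<le> 2 ^ (n - 2)" by simp
  have e: "real n - 4 = real (n - 2) - 2" using assms(1) by (simp add: of_nat_diff)
  have "2 powr (real n - 4) = 2 powr (real (n - 2)) / 2 powr 2"
    unfolding e by (rule powr_diff)
  also have "\<dots> = 2 ^ (n - 2) / 4" by (simp add: powr_realpow)
  finally show ?thesis using h by simp
qed

end
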